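(* Let $n\ge1$, let $j_1,\dots,j_n\ge 1$ be integers, let $h_k\in D_{j_k}$ and let $i_k\ge 0$ be integers for $k=1,\dots,n$. Then: (i) if $\sum_{k=1}^n i_k/j_k>1$, then $h_1^{i_1}\cdots h_n^{i_n}=0$ in ${}^\bullet\mathbb{R}$; (ii) if $p\ge1$ is an integer with $\frac1p\le \sum_{k=1}^n i_k/j_k\le 1$, then $h_1^{i_1}\cdots h_n^{i_n}\in D_p$.
   Context: A function $x:\mathbb{R}\to\mathbb{R}$ is called nilpotent if there exists $k\in\mathbb{N}$ such that $|x(t)-x(0)|^k=o(t)$ as $t\to 0$; $\mathrm{Nil}$ denotes the set of all nilpotent functions. For $x,y\in\mathrm{Nil}$ write $x\sim y$ iff $x(t)=y(t)+o(t)$ as $t\to0$. ${}^\bullet\mathbb{R}:=\mathrm{Nil}/\sim$ is the commutative ring with operations induced by pointwise sum and product. $D:=\{h\in{}^\bullet\mathbb{R} : \limsup_{t\to0}|h(t)/t|<+\infty\}$, and for integers $k\ge1$, $D_k:=\{h\in{}^\bullet\mathbb{R} : h^k\in D\}$. *)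

theory Defs
  imports "HOL-Analysis.Analysis" "HOL-Library.Landau_Symbols"
begin

definition nilpotent_fun :: "(real \<Rightarrow> real) \<Rightarrow> bool" where
  "nilpotent_fun x \<longleftrightarrow> (\<exists>k::nat. (\<lambda>t. \<bar>x t - x 0\<bar> ^ k) \<in> o[at 0](\<lambda>t. t))"

definition Nil_set :: "(real \<Rightarrow> real) set" where
  "Nil_set = {x. nilpotent_fun x}"

definition fequiv :: "(real \<Rightarrow> real) \<Rightarrow> (real \<Rightarrow> real) \<Rightarrow> bool" where
  "fequiv x y \<longleftrightarrow> x \<in> Nil_set \<and> y \<in> Nil_set \<and> (\<lambda>t. x t - y t) \<in> o[at 0](\<lambda>t. t)"

text \<open>Membership of the class of a representative h in D:
  limsup_{t\<rightarrow>0} |h(t)/t| < +\<infinity>.  (Well defined on classes.)\<close>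
definition in_D :: "(real \<Rightarrow> real) \<Rightarrow> bool" where
  "in_D h \<longleftrightarrow> h \<in> Nil_set \<and> Limsup (at 0) (\<lambda>t. ereal \<bar>h t / t\<bar>) < \<infinity>"

definition in_Dk :: "nat \<Rightarrow> (real \<Rightarrow> real) \<Rightarrow> bool" where
  "in_Dk k h \<longleftrightarrow> h \<in> Nil_set \<and> in_D (\<lambda>t. h t ^ k)"

end

theory Submission imports Defs begin

lemma root_le: "(x::real)^m \<le> y^m \<Longrightarrow> 0 \<le> y \<Longrightarrow> m \<ge> 1 \<Longrightarrow> x \<le> y"
proof -
  assume a: "x^m \<le> y^m" "0 \<le> y" "m \<ge> 1"
  then obtain n where "m = Suc n" by (cases m) auto
  with a show ?thesis using power_le_imp_le_base[of x n y] by simp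
qed

lemma Dk_bound:
  assumes "in_Dk j h"
  shows "\<exists>B\<ge>0. eventually (\<lambda>t. \<bar>h t\<bar>^j \<le> B*\<bar>t\<bar>) (at 0)"
proof -
  have "Limsup (at 0) (\<lambda>t. ereal \<bar>h t ^ j / t\<bar>) < \<infinity>"
    using assms unfolding in_Dk_def in_D_def by auto
  then obtain B where B: "Limsup (at 0) (\<lambda>t. ereal \<bar>h t ^ j / t\<bar>) < ereal B"
    by (metis ereal_dense2 less_ereal.simps(2) less_ereal.simps(3) ereal_infty_less(1) not_less_iff_gr_or_eq ereal_cases less_PInf_Ex_of_nat)
  have "eventually (\<lambda>t. ereal \<bar>h t ^ j / t\<bar> < ereal B) (at 0)"
    by (rule Limsup_lessD[OF B])
  moreover have "eventually (\<lambda>t::real. t \<noteq> 0) (at 0)"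
    by (simp add: eventually_at_filter)
  ultimately have "eventually (\<lambda>t. \<bar>h t\<bar>^j \<le> max B 0*\<bar>t\<bar>) (at 0)"
  proof eventually_elim
    case (elim t)
    then have "\<bar>h t\<bar>^j / \<bar>t\<bar> < B" by (simp add: power_abs abs_divide)
    then have "\<bar>h t\<bar>^j < B * \<bar>t\<bar>" using elim by (simp add: divide_less_eq)
    then show ?case by (smt (verit) abs_ge_zero mult_right_mono)
  qed
  then show ?thesis by (intro exI[of _ "max B 0"]) auto
qed

lemma at0_small: "(c::real) > 0 \<Longrightarrow> eventually (\<lambda>t::real. \<bar>t\<bar> < c) (at 0)"
  unfolding eventually_at by (intro exI[of _ c]) auto

lemma Dk_zero:
  assumes "in_Dk j h" "j \<ge> 1"
  shows "h 0 = 0"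
proof (rule ccontr)
  assume c0: "h 0 \<noteq> 0"
  define c where "c = h 0"
  obtain k where k: "(\<lambda>t. \<bar>h t - h 0\<bar> ^ k) \<in> o[at 0](\<lambda>t. t)"
    using assms unfolding in_Dk_def Nil_set_def nilpotent_fun_def by auto
  obtain B where B: "B \<ge> 0" "eventually (\<lambda>t. \<bar>h t\<bar>^j \<le> B*\<bar>t\<bar>) (at 0)"
    using Dk_bound[OF assms(1)] by auto
  define e where "e = (\<bar>c\<bar>/2)^j / (B+1)"
  have e: "e > 0" using c0 B unfolding e_def c_def by auto
  have ev1: "eventually (\<lambda>t. \<bar>h t - h 0\<bar> ^ k \<le> 1 * \<bar>t\<bar>) (at 0)"
    using landau_o.smallD[OF k, of 1] by simp
  define d where "d = min e ((\<bar>c\<bar>/2)^k)"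
  have d: "d > 0" using e c0 unfolding d_def c_def by auto
  have "eventually (\<lambda>t. False) (at (0::real))"
    using ev1 B(2) at0_small[OF d]
  proof eventually_elim
    case (elim t)
    have "\<bar>h t\<bar>^j \<le> B * e" using elim(2) elim(3) B(1) unfolding d_def
      by (smt (verit) mult_left_mono)
    also have "\<dots> = (B/(B+1)) * (\<bar>c\<bar>/2)^j" unfolding e_def by simp
    also have "\<dots> \<le> (\<bar>c\<bar>/2)^j" using B(1)
      by (intro mult_left_le_one_le) auto
    finally have hj: "\<bar>h t\<bar>^j \<le> (\<bar>c\<bar>/2)^j" .
    have "\<bar>h t\<bar> \<le> \<bar>c\<bar>/2" using root_le[OF hj _ assms(2)] by simp
    then have "\<bar>c\<bar>/2 \<le> \<bar>h t - h 0\<bar>" unfolding c_def by linarith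
    then have "(\<bar>c\<bar>/2)^k \<le> \<bar>h t - h 0\<bar>^k" by (intro power_mono) auto
    also have "\<dots> \<le> \<bar>t\<bar>" using elim(1) by simp
    finally show False using elim(3) unfolding d_def by linarith
  qed
  then show False by simp
qed

lemma prod_bound:
  assumes "finite A" "\<And>k. k \<in> A \<Longrightarrow> in_Dk (j k) (h k)"
  shows "\<exists>B\<ge>0. eventually (\<lambda>t. (\<Prod>k\<in>A. (\<bar>h k t\<bar>^(j k))^(m k)) \<le> B * \<bar>t\<bar>^(\<Sum>k\<in>A. m k)) (at 0)"
proof -
  have "\<forall>k\<in>A. \<exists>B. B \<ge> 0 \<and> eventually (\<lambda>t. \<bar>h k t\<bar>^(j k) \<le> B*\<bar>t\<bar>) (at 0)"
    using Dk_bound assms(2) by blast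
  then obtain Bf where Bf: "\<And>k. k \<in> A \<Longrightarrow> Bf k \<ge> 0 \<and> eventually (\<lambda>t. \<bar>h k t\<bar>^(j k) \<le> Bf k*\<bar>t\<bar>) (at 0)"
    by metis
  have ev: "eventually (\<lambda>t. \<forall>k\<in>A. \<bar>h k t\<bar>^(j k) \<le> Bf k*\<bar>t\<bar>) (at 0)"
    using Bf by (intro eventually_ball_finite[OF assms(1)]) auto
  have "eventually (\<lambda>t. (\<Prod>k\<in>A. (\<bar>h k t\<bar>^(j k))^(m k)) \<le> (\<Prod>k\<in>A. Bf k ^ m k) * \<bar>t\<bar>^(\<Sum>k\<in>A. m k)) (at 0)"
    using ev
  proof eventually_elim
    case (elim t)
    have "(\<Prod>k\<in>A. (\<bar>h k t\<bar>^(j k))^(m k)) \<le> (\<Prod>k\<in>A. (Bf k * \<bar>t\<bar>)^(m k))"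
      using elim by (intro prod_mono conjI power_mono) auto
    also have "\<dots> = (\<Prod>k\<in>A. Bf k ^ m k) * \<bar>t\<bar>^(\<Sum>k\<in>A. m k)"
      by (simp add: power_mult_distrib prod.distrib power_sum)
    finally show ?case .
  qed
  moreover have "(\<Prod>k\<in>A. Bf k ^ m k) \<ge> 0" using Bf by (intro prod_nonneg) auto
  ultimately show ?thesis by blast
qed

lemma small_from_pow:
  fixes g :: "real \<Rightarrow> real" and B :: real
  assumes "M \<ge> 1" "eventually (\<lambda>t. \<bar>g t\<bar>^M \<le> B*\<bar>t\<bar>^(M+1)) (at 0)" "B \<ge> 0"
  shows "g \<in> o[at 0](\<lambda>t. t)"
proof (rule landau_o.smallI)
  fix c :: real assume c: "c > 0"
  have "c^M/(B+1) > 0" using c assms(3) by simp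
  from at0_small[OF this] assms(2)
  show "eventually (\<lambda>t. norm (g t) \<le> c * norm t) (at 0)"
  proof eventually_elim
    case (elim t)
    have "B * \<bar>t\<bar> \<le> B * (c^M/(B+1))" using elim(1) assms(3) by (intro mult_left_mono) auto
    also have "\<dots> = (B/(B+1)) * c^M" by simp
    also have "\<dots> \<le> c^M" using assms(3) c by (intro mult_left_le_one_le) auto
    finally have Bt: "B * \<bar>t\<bar> \<le> c^M" .
    have "\<bar>g t\<bar>^M \<le> (B*\<bar>t\<bar>) * \<bar>t\<bar>^M" using elim(2) by (simp add: algebra_simps)
    also have "\<dots> \<le> c^M * \<bar>t\<bar>^M" using Bt by (intro mult_right_mono) auto
    also have "\<dots> = (c * \<bar>t\<bar>)^M" by (simp add: power_mult_distrib)
    finally have "\<bar>g t\<bar>^M \<le> (c * \<bar>t\<bar>)^M" .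
    from root_le[OF this _ assms(1)] c show ?case by simp
  qed
qed

theorem mainTheorem4:
  fixes n :: nat and j i :: "nat \<Rightarrow> nat" and h :: "nat \<Rightarrow> real \<Rightarrow> real"
  assumes "n \<ge> 1"
    and "\<And>k. k \<in> {1..n} \<Longrightarrow> j k \<ge> 1"
    and "\<And>k. k \<in> {1..n} \<Longrightarrow> in_Dk (j k) (h k)"
  shows "((\<Sum>k=1..n. real (i k) / real (j k)) > 1 \<longrightarrow>
           fequiv (\<lambda>t. \<Prod>k=1..n. h k t ^ i k) (\<lambda>t. 0))
       \<and> (\<forall>p::nat. p \<ge> 1 \<and> 1 / real p \<le> (\<Sum>k=1..n. real (i k) / real (j k)) \<and>
           (\<Sum>k=1..n. real (i k) / real (j k)) \<le> 1 \<longrightarrow>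
           in_Dk p (\<lambda>t. \<Prod>k=1..n. h k t ^ i k))"
proof -
  define P where "P = (\<lambda>t. \<Prod>k=1..n. h k t ^ i k)"
  define s where "s = (\<Sum>k=1..n. real (i k) / real (j k))"
  define L where "L = (\<Prod>k=1..n. j k)"
  define m where "m = (\<lambda>k. i k * (L div j k))"
  define N where "N = (\<Sum>k=1..n. m k)"
  have dvdL: "j k dvd L" if "k \<in> {1..n}" for k
    unfolding L_def using that by (intro dvd_prodI) auto
  have L1: "L \<ge> 1" unfolding L_def using assms(2)
    by (metis One_nat_def Suc_le_eq prod_pos)
  have NL: "real N = real L * s"
  proof -
    have "real (m k) = real L * (real (i k) / real (j k))" if "k \<in> {1..n}" for k
    proof -
      have "real (L div j k) = real L / real (j k)"
        using dvdL[OF that] by (simp add: real_of_nat_div)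
      then show ?thesis unfolding m_def by simp
    qed
    then show ?thesis unfolding N_def s_def
      by (simp add: sum_distrib_left)
  qed
  have Pabs: "\<bar>P t\<bar>^L = (\<Prod>k\<in>{1..n}. (\<bar>h k t\<bar>^(j k))^(m k))" for t
  proof -
    have "\<bar>P t\<bar>^L = (\<Prod>k\<in>{1..n}. \<bar>h k t\<bar>^(i k * L))"
      unfolding P_def by (simp add: abs_prod prod_power_distrib power_abs power_mult)
    also have "\<dots> = (\<Prod>k\<in>{1..n}. (\<bar>h k t\<bar>^(j k))^(m k))"
    proof (rule prod.cong)
      fix k assume k: "k \<in> {1..n}"
      have e: "j k * (i k * (L div j k)) = i k * L" using dvdL[OF k]
        by (metis dvd_mult_div_cancel mult.left_commute)
      have "(\<bar>h k t\<bar>^(j k))^(m k) = \<bar>h k t\<bar>^(j k * (i k * (L div j k)))"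
        unfolding m_def by (rule power_mult[symmetric])
      then show "\<bar>h k t\<bar>^(i k * L) = (\<bar>h k t\<bar>^(j k))^(m k)"
        unfolding e by simp
    qed simp
    finally show ?thesis .
  qed
  obtain B where B: "B \<ge> 0" "eventually (\<lambda>t. \<bar>P t\<bar>^L \<le> B * \<bar>t\<bar>^N) (at 0)"
    using prod_bound[of "{1..n}" j h m] assms(3) unfolding Pabs N_def by auto
  have P0: "P 0 = 0" if "s > 0"
  proof -
    have "\<exists>k\<in>{1..n}. i k > 0"
    proof (rule ccontr)
      assume "\<not> ?thesis"
      then have "s = 0" unfolding s_def by (intro sum.neutral) auto
      with that show False by simp
    qed
    then obtain k where k: "k \<in> {1..n}" "i k > 0" by blast
    have "h k 0 = 0" using Dk_zero assms(2,3) k(1) by blast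
    then have "h k 0 ^ i k = 0" using k(2) by simp
    then show ?thesis unfolding P_def using k(1) by (intro prod_zero) auto
  qed
  have evt1: "eventually (\<lambda>t::real. \<bar>t\<bar> < 1) (at 0)" by (rule at0_small) simp
  have part1: "fequiv P (\<lambda>t. 0)" if s1: "s > 1"
  proof -
    have "real N > real L" using NL s1 L1 by simp
    then have NL1: "N \<ge> L + 1" by simp
    have ev: "eventually (\<lambda>t. \<bar>P t\<bar>^L \<le> B * \<bar>t\<bar>^(L+1)) (at 0)"
      using B(2) evt1
    proof eventually_elim
      case (elim t)
      have "\<bar>t\<bar>^N \<le> \<bar>t\<bar>^(L+1)" using elim(2) NL1 by (intro power_decreasing) auto
      then show ?case using elim(1) B(1) by (meson mult_left_mono order_trans)
    qed
    have Po: "P \<in> o[at 0](\<lambda>t. t)" by (rule small_from_pow[OF L1 ev B(1)])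
    have P00: "P 0 = 0" using P0 s1 by simp
    have "nilpotent_fun P" unfolding nilpotent_fun_def
      using Po P00 by (intro exI[of _ 1]) (simp add: landau_o.small.abs_in_iff)
    moreover have "nilpotent_fun (\<lambda>t. 0)" unfolding nilpotent_fun_def
      by (intro exI[of _ 1]) simp
    ultimately show ?thesis unfolding fequiv_def Nil_set_def using Po by simp
  qed
  have part2: "in_Dk p P" if p: "p \<ge> 1" "1 / real p \<le> s" for p :: nat
  proof -
    have "1 / real p > 0" using p by simp
    then have sp: "s > 0" using p by linarith
    have "real p * s \<ge> 1" using p by (simp add: field_simps)
    then have "real L * 1 \<le> real L * (real p * s)" by (intro mult_left_mono) auto
    then have "real L \<le> real p * real N" by (simp add: NL algebra_simps)
    then have pN: "L \<le> p * N" by (simp only: of_nat_mult[symmetric] of_nat_le_iff)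
    have P00: "P 0 = 0" using P0 sp by simp
    have ev2: "eventually (\<lambda>t. \<bar>\<bar>P t\<bar>^(2*p)\<bar>^L \<le> B^(2*p) * \<bar>t\<bar>^(L+1)) (at 0)"
      using B(2) evt1
    proof eventually_elim
      case (elim t)
      have "\<bar>\<bar>P t\<bar>^(2*p)\<bar>^L = (\<bar>P t\<bar>^L)^(2*p)" by (simp add: power_mult[symmetric] mult.commute)
      also have "\<dots> \<le> (B * \<bar>t\<bar>^N)^(2*p)" using elim(1) by (intro power_mono) auto
      also have "\<dots> = B^(2*p) * \<bar>t\<bar>^(2*p*N)" by (simp add: power_mult_distrib power_mult[symmetric] mult.commute)
      also have "\<dots> \<le> B^(2*p) * \<bar>t\<bar>^(L+1)"
        using elim(2) pN L1 B(1) by (intro mult_left_mono power_decreasing) auto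
      finally show ?case .
    qed
    have o2: "(\<lambda>t. \<bar>P t\<bar>^(2*p)) \<in> o[at 0](\<lambda>t. t)"
      by (rule small_from_pow[OF L1 ev2]) (simp add: B(1))
    have nilP: "P \<in> Nil_set" unfolding Nil_set_def nilpotent_fun_def
      using o2 P00 by (intro CollectI exI[of _ "2*p"]) simp
    have nilPp: "(\<lambda>t. P t ^ p) \<in> Nil_set" unfolding Nil_set_def nilpotent_fun_def
    proof (intro CollectI exI[of _ 2])
      have "\<bar>P t ^ p - P 0 ^ p\<bar>^2 = \<bar>P t\<bar>^(2*p)" for t
      proof -
        have "\<bar>P t ^ p - P 0 ^ p\<bar> = \<bar>P t\<bar>^p" using p by (simp add: P00 power_abs power_0_left)
        then have "\<bar>P t ^ p - P 0 ^ p\<bar>^2 = (\<bar>P t\<bar>^p)^2" by simp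
        also have "\<dots> = \<bar>P t\<bar>^(2*p)" by (subst mult.commute) (rule power_mult[symmetric])
        finally show ?thesis .
      qed
      then have "(\<lambda>t. \<bar>P t ^ p - P 0 ^ p\<bar>^2) = (\<lambda>t. \<bar>P t\<bar>^(2*p))" by simp
      then show "(\<lambda>t. \<bar>P t ^ p - P 0 ^ p\<bar>^2) \<in> o[at 0](\<lambda>t. t)" using o2 by simp
    qed
    define C where "C = max 1 (B^p)"
    have ereal_less_PInf_C: "ereal C < \<infinity>" by simp
    have evne: "eventually (\<lambda>t::real. t \<noteq> 0) (at 0)"
      by (simp add: eventually_at_filter)
    have "eventually (\<lambda>t. ereal \<bar>P t ^ p / t\<bar> \<le> ereal C) (at 0)"
      using B(2) evt1 evne
    proof eventually_elim
      case (elim t)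
      define x where "x = \<bar>P t\<bar>^p / \<bar>t\<bar>"
      have x0: "x \<ge> 0" unfolding x_def by simp
      have tN: "(\<bar>t\<bar>^N)^p = \<bar>t\<bar>^(p*N)" by (subst mult.commute) (rule power_mult[symmetric])
      have "\<bar>P t\<bar>^(p*L) = (\<bar>P t\<bar>^L)^p" by (simp add: power_mult[symmetric] mult.commute)
      also have "\<dots> \<le> (B * \<bar>t\<bar>^N)^p" using elim(1) by (intro power_mono) auto
      also have "\<dots> = B^p * \<bar>t\<bar>^(p*N)" by (simp add: power_mult_distrib tN)
      also have "\<dots> \<le> B^p * \<bar>t\<bar>^L"
        using elim(2) pN B(1) by (intro mult_left_mono power_decreasing) auto
      finally have a: "\<bar>P t\<bar>^(p*L) \<le> B^p * \<bar>t\<bar>^L" .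
      have "x^L = \<bar>P t\<bar>^(p*L) / \<bar>t\<bar>^L" unfolding x_def
        by (simp add: power_divide power_mult)
      also have "\<dots> \<le> B^p" using a elim(3) by (simp add: divide_le_eq)
      finally have xL: "x^L \<le> B^p" .
      have "x \<le> C"
      proof (cases "x \<le> 1")
        case False
        then have "x^1 \<le> x^L" using L1 by (intro power_increasing) auto
        then show ?thesis using xL unfolding C_def by simp
      qed (simp add: C_def)
      then show ?case unfolding x_def by (simp add: abs_divide power_abs)
    qed
    then have "Limsup (at 0) (\<lambda>t. ereal \<bar>P t ^ p / t\<bar>) \<le> ereal C" by (rule Limsup_bounded)
    then have "Limsup (at 0) (\<lambda>t. ereal \<bar>P t ^ p / t\<bar>) < \<infinity>"
      using le_less_trans[OF _ ereal_less_PInf_C] by blast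
    then show ?thesis unfolding in_Dk_def in_D_def using nilP nilPp by simp
  qed
  show ?thesis using part1 part2 unfolding P_def s_def by blast
qed

end
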